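(* Let $n$ be even, $V=\{1,\dots,n\}$, and let $\{C,\bar C\}$ be a partition of $V$ with $|C|=|\bar C|=n/2$. Let $0\le p_{\rm out}$, $p_{\rm in}\le1$ with $0<p_{\rm in}+p_{\rm out}<2$. Let $A$ be the random symmetric $\{0,1\}$ adjacency matrix of the stochastic block model: its entries are independent Bernoulli variables (up to symmetry), with $a_{ij}=1$ with probability $p_{\rm in}$ if $i,j$ lie in the same set of the partition and with probability $p_{\rm out}$ otherwise. Let $M=A-\frac{\mathbb{1}^\top A\mathbb{1}}{n^2}J$ be its modularity matrix, let $z\in\mathbb{R}^n$ with $z_i=1$ if $i\in C$ and $z_i=-1$ otherwise, $Z=zz^\top$, and $$\gamma=\frac{p_{\rm in}-p_{\rm out}}{\sqrt{(p_{\rm in}+p_{\rm out})(2-p_{\rm in}-p_{\rm out})}}.$$ Then for every fixed $\varepsilon>0$, the probability that $\cos(M,Z)^2\ge\gamma^2-\varepsilon$ tends to $1$ as $n\to\infty$.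
   Context: $\mathbb{1}$ is the all-ones vector and $J=\mathbb{1}\mathbb{1}^\top$ the all-ones matrix. For nonzero matrices, $\cos(A,B)=\mathrm{tr}(AB^\top)/(\|A\|_F\|B\|_F)$ with $\|\cdot\|_F$ the Frobenius norm. *)

theory Defs
  imports "HOL-Probability.Probability"
begin

text \<open>Vertices are 0,...,n-1. Square n x n real matrices are functions nat => nat => real,
  only entries with indices below n matter.\<close>

definition mat_inner :: "nat \<Rightarrow> (nat \<Rightarrow> nat \<Rightarrow> real) \<Rightarrow> (nat \<Rightarrow> nat \<Rightarrow> real) \<Rightarrow> real" where
  "mat_inner n A B = (\<Sum>i<n. \<Sum>j<n. A i j * B i j)"

definition fro_norm :: "nat \<Rightarrow> (nat \<Rightarrow> nat \<Rightarrow> real) \<Rightarrow> real" where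
  "fro_norm n A = sqrt (mat_inner n A A)"

definition mat_cos :: "nat \<Rightarrow> (nat \<Rightarrow> nat \<Rightarrow> real) \<Rightarrow> (nat \<Rightarrow> nat \<Rightarrow> real) \<Rightarrow> real" where
  "mat_cos n A B = mat_inner n A B / (fro_norm n A * fro_norm n B)"

text \<open>Random SBM graph: independent Bernoulli edge indicators for index pairs (i,j), i <= j < n
  (diagonal included, as in the statement).\<close>
definition sbm_pmf :: "nat \<Rightarrow> nat set \<Rightarrow> real \<Rightarrow> real \<Rightarrow> (nat \<times> nat \<Rightarrow> bool) pmf" where
  "sbm_pmf n C pin pout =
     Pi_pmf {(i, j). i \<le> j \<and> j < n} False
       (\<lambda>(i, j). bernoulli_pmf (if (i \<in> C \<longleftrightarrow> j \<in> C) then pin else pout))"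

definition adj_mat :: "(nat \<times> nat \<Rightarrow> bool) \<Rightarrow> nat \<Rightarrow> nat \<Rightarrow> real" where
  "adj_mat E i j = (if E (min i j, max i j) then 1 else 0)"

definition modularity_mat :: "nat \<Rightarrow> (nat \<Rightarrow> nat \<Rightarrow> real) \<Rightarrow> nat \<Rightarrow> nat \<Rightarrow> real" where
  "modularity_mat n A i j = A i j - (\<Sum>k<n. \<Sum>l<n. A k l) / (real n)^2"

definition zvec :: "nat set \<Rightarrow> nat \<Rightarrow> real" where
  "zvec C i = (if i \<in> C then 1 else -1)"

definition zmat :: "nat set \<Rightarrow> nat \<Rightarrow> nat \<Rightarrow> real" where
  "zmat C i j = zvec C i * zvec C j"

definition sbm_gamma :: "real \<Rightarrow> real \<Rightarrow> real" where
  "sbm_gamma pin pout = (pin - pout) / sqrt ((pin + pout) * (2 - pin - pout))"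

end

theory Submission
  imports Defs "HOL-Real_Asymp.Real_Asymp"
begin

lemma conc:
  fixes I :: "'b set" and c q :: "'b \<Rightarrow> real" and t :: real
  assumes fin: "finite I" and ne: "I \<noteq> {}" and cb: "\<And>i. i\<in>I \<Longrightarrow> \<bar>c i\<bar> \<le> 2"
    and qb: "\<And>i. i\<in>I \<Longrightarrow> 0 \<le> q i \<and> q i \<le> 1" and t: "t \<ge> 0"
  shows "measure_pmf.prob (Pi_pmf I False (\<lambda>i. bernoulli_pmf (q i)))
     {E. \<bar>(\<Sum>i\<in>I. c i * (if E i then 1 else 0)) - (\<Sum>i\<in>I. c i * q i)\<bar> \<ge> t}
      \<le> 2 * exp (-2 * t^2 / (16 * real (card I)))"
proof -
  let ?P = "Pi_pmf I False (\<lambda>i. bernoulli_pmf (q i))"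
  have ex: "measure_pmf.expectation ?P (\<lambda>E. c i * (if E i then 1 else 0)) = c i * q i"
    if i: "i \<in> I" for i
  proof -
    have "measure_pmf.expectation ?P (\<lambda>E. c i * (if E i then 1 else 0))
       = measure_pmf.expectation (map_pmf (\<lambda>E. E i) ?P) (\<lambda>b. c i * (if b then 1 else 0))"
      by simp
    also have "map_pmf (\<lambda>E. E i) ?P = bernoulli_pmf (q i)"
      using fin i by (subst Pi_pmf_component) auto
    finally show ?thesis using qb[OF i] by simp
  qed
  interpret H: Hoeffding_ineq "measure_pmf ?P" I "\<lambda>i E. c i * (if E i then 1 else 0)"
     "\<lambda>_. -2" "\<lambda>_. 2" "\<Sum>i\<in>I. c i * q i"
  proof unfold_locales
    show "prob_space.indep_vars (measure_pmf ?P) (\<lambda>_. borel) (\<lambda>i E. c i * (if E i then 1 else 0)) I"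
      by (intro prob_space.indep_vars_compose2[OF _ indep_vars_Pi_pmf])
         (auto simp: measure_pmf.prob_space_axioms fin)
    show "(\<Sum>i\<in>I. c i * q i) \<equiv> (\<Sum>i\<in>I. measure_pmf.expectation ?P (\<lambda>E. c i * (if E i then 1 else 0)))"
      by (rule eq_reflection, rule sum.cong[OF refl], rule ex[symmetric])
  next
    fix i assume "i \<in> I"
    then show "AE x in measure_pmf ?P. c i * (if x i then 1 else 0) \<in> {- 2..2}"
      using cb[of i] by (auto simp: abs_le_iff)
  qed (use fin in auto)
  have s: "(\<Sum>i\<in>I. (2 - (-2::real))\<^sup>2) = 16 * real (card I)" by simp
  have pos: "(\<Sum>i\<in>I. (2 - (-2::real))\<^sup>2) > 0" using fin ne by (simp add: card_gt_0_iff)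
  show ?thesis using H.Hoeffding_ineq_abs_ge[OF t pos] unfolding s by simp
qed

lemma sym_sum:
  fixes G :: "nat \<Rightarrow> nat \<Rightarrow> real"
  assumes "\<And>i j. G i j = G j i"
  shows "(\<Sum>i<n. \<Sum>j<n. G i j) = (\<Sum>j<n. \<Sum>i\<le>j. if i = j then G i j else 2 * G i j)"
proof (induction n)
  case 0 then show ?case by simp
next
  case (Suc n)
  have a: "(\<Sum>i<Suc n. \<Sum>j<Suc n. G i j) = (\<Sum>i<n. \<Sum>j<n. G i j) + 2 * (\<Sum>i<n. G i n) + G n n"
  proof -
    have "(\<Sum>i<Suc n. \<Sum>j<Suc n. G i j) = (\<Sum>i<n. \<Sum>j<n. G i j) + (\<Sum>i<n. G i n) + (\<Sum>j<n. G n j) + G n n"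
      by (simp add: sum.distrib)
    also have "(\<Sum>j<n. G n j) = (\<Sum>i<n. G i n)" using assms by simp
    finally show ?thesis by simp
  qed
  have b: "(\<Sum>i\<le>n. if i = n then G i n else 2 * G i n) = 2 * (\<Sum>i<n. G i n) + G n n"
    by (simp add: lessThan_Suc_atMost[symmetric] sum_distrib_left)
  show ?case using Suc a b by simp
qed

lemma pairs_sum:
  fixes n :: nat and H :: "nat \<times> nat \<Rightarrow> real"
  shows
  "(\<Sum>p\<in>{(i,j). i \<le> j \<and> j < n}. H p) = (\<Sum>j<n. \<Sum>i\<le>j. H (i, j))"
proof -
  have e: "{(i,j). i \<le> j \<and> j < n} = (\<lambda>(j,i). (i,j)) ` (SIGMA j:{..<n}. {..j})" by auto
  have inj: "inj_on (\<lambda>(j::nat,i::nat). (i,j)) (SIGMA j:{..<n}. {..j})" by (auto simp: inj_on_def)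
  show ?thesis unfolding e by (subst sum.reindex[OF inj]) (simp add: sum.Sigma split_def)
qed

lemma reindex_adj:
  fixes w :: "nat \<Rightarrow> nat \<Rightarrow> real"
  assumes "\<And>i j. w i j = w j i"
  shows "(\<Sum>i<n. \<Sum>j<n. adj_mat E i j * w i j)
     = (\<Sum>p\<in>{(i,j). i \<le> j \<and> j < n}. (if fst p = snd p then w (fst p) (snd p) else 2 * w (fst p) (snd p))
            * (if E p then 1 else 0))"
  apply (subst sym_sum)
   apply (simp add: adj_mat_def assms min.commute max.commute)
  apply (subst pairs_sum)
  apply (auto intro!: sum.cong simp: adj_mat_def min_def max_def)
  done

lemma reindex_q:
  fixes w qq :: "nat \<Rightarrow> nat \<Rightarrow> real"
  assumes "\<And>i j. w i j = w j i" "\<And>i j. qq i j = qq j i"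
  shows "(\<Sum>i<n. \<Sum>j<n. w i j * qq i j)
     = (\<Sum>p\<in>{(i,j). i \<le> j \<and> j < n}. (if fst p = snd p then w (fst p) (snd p) else 2 * w (fst p) (snd p))
            * qq (fst p) (snd p))"
  apply (subst sym_sum)
   apply (simp add: assms)
  apply (subst pairs_sum)
  apply (auto intro!: sum.cong)
  done

lemma count_sum:
  fixes a b :: real
  assumes "C \<subseteq> {..<n}"
  shows "(\<Sum>j<n. if j \<in> C then a else b) = real (card C) * a + real (n - card C) * b"
proof -
  have fC: "finite C" using assms finite_subset by blast
  have "(\<Sum>j<n. if j \<in> C then a else b) = (\<Sum>j\<in>{..<n} \<inter> C. a) + (\<Sum>j\<in>{..<n} - C. b)"
    by (subst sum.If_cases) (auto simp: Int_def Diff_eq)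
  also have "{..<n} \<inter> C = C" using assms by auto
  also have "card ({..<n} - C) = n - card C" using assms fC by (simp add: card_Diff_subset)
  ultimately show ?thesis by simp
qed

lemma cos_formula:
  fixes A :: "nat \<Rightarrow> nat \<Rightarrow> real"
  assumes n: "n > 0" and A01: "\<And>i j. A i j * A i j = A i j"
    and z0: "(\<Sum>i<n. zvec C i) = 0"
  shows "(mat_cos n (modularity_mat n A) (zmat C))^2
     = ((\<Sum>i<n. \<Sum>j<n. A i j * zmat C i j) / (real n)^2)^2 /
       (((\<Sum>i<n. \<Sum>j<n. A i j) / (real n)^2) * (1 - (\<Sum>i<n. \<Sum>j<n. A i j) / (real n)^2))"
proof -
  define S1 where "S1 = (\<Sum>i<n. \<Sum>j<n. A i j * zmat C i j)"
  define S2 where "S2 = (\<Sum>i<n. \<Sum>j<n. A i j)"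
  define s where "s = S2 / (real n)^2"
  have zz: "zvec C i * zvec C i = 1" for i by (simp add: zvec_def)
  have i1: "mat_inner n (modularity_mat n A) (zmat C) = S1"
  proof -
    have inner0: "(\<Sum>j<n. s * (zvec C i * zvec C j)) = 0" for i
    proof -
      have "(\<Sum>j<n. s * (zvec C i * zvec C j)) = s * zvec C i * (\<Sum>j<n. zvec C j)"
        by (simp add: sum_distrib_left mult.assoc)
      then show ?thesis using z0 by simp
    qed
    have "mat_inner n (modularity_mat n A) (zmat C)
        = (\<Sum>i<n. (\<Sum>j<n. A i j * zmat C i j) - (\<Sum>j<n. s * (zvec C i * zvec C j)))"
      unfolding mat_inner_def modularity_mat_def s_def S2_def zmat_def
      by (simp add: left_diff_distrib sum_subtractf)
    then show ?thesis using inner0 by (simp add: S1_def)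
  qed
  have i2: "mat_inner n (modularity_mat n A) (modularity_mat n A) = S2 - S2^2 / (real n)^2"
  proof -
    have "mat_inner n (modularity_mat n A) (modularity_mat n A)
        = (\<Sum>i<n. \<Sum>j<n. A i j * A i j - 2 * s * A i j + s * s)"
      unfolding mat_inner_def modularity_mat_def s_def S2_def
      by (intro sum.cong refl) (simp add: algebra_simps power2_eq_square)
    also have "\<dots> = S2 - 2 * s * S2 + (real n)^2 * s * s"
      by (simp add: A01 sum.distrib sum_subtractf sum_distrib_left S2_def power2_eq_square)
    finally show ?thesis using n by (simp add: s_def power2_eq_square field_simps)
  qed
  have i3: "mat_inner n (zmat C) (zmat C) = (real n)^2"
    unfolding mat_inner_def zmat_def
    by (simp add: power2_eq_square mult.assoc mult.left_commute[of "zvec C _" "zvec C _"] zz)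
  have nn: "mat_inner n (modularity_mat n A) (modularity_mat n A) \<ge> 0"
    unfolding mat_inner_def by (intro sum_nonneg) simp
  have "(mat_cos n (modularity_mat n A) (zmat C))^2 = S1^2 / ((S2 - S2^2 / (real n)^2) * (real n)^2)"
    unfolding mat_cos_def fro_norm_def using nn i1 i2 i3
    by (simp add: power_divide power_mult_distrib)
  also have "\<dots> = (S1 / (real n)^2)^2 / ((S2 / (real n)^2) * (1 - S2 / (real n)^2))"
  proof -
    define N where "N = (real n)^2"
    have N: "N \<noteq> 0" using n by (simp add: N_def)
    have d1: "(S2 - S2^2 / N) * N = S2 * N - S2^2" using N by (simp add: field_simps)
    have d2: "(S2 / N) * (1 - S2 / N) = (S2 * N - S2^2) / N^2" using N
      by (simp add: field_simps power2_eq_square)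
    have "(S1 / N)^2 / ((S2 / N) * (1 - S2 / N)) = (S1^2 / N^2) / ((S2 * N - S2^2) / N^2)"
      by (simp only: d2 power_divide)
    also have "\<dots> = S1^2 / (S2 * N - S2^2)" using N by simp
    finally show ?thesis by (simp only: N_def[symmetric] d1)
  qed
  finally show ?thesis by (simp add: S1_def S2_def)
qed

lemma cont_delta:
  fixes x0 y0 e :: real
  assumes "0 < y0" "y0 < 1" "e > 0"
  shows "\<exists>d>0. \<forall>x y. \<bar>x - x0\<bar> < d \<and> \<bar>y - y0\<bar> < d \<longrightarrow>
            x^2 / (y * (1 - y)) > x0^2 / (y0 * (1 - y0)) - e"
proof -
  let ?g = "\<lambda>p::real\<times>real. (fst p)^2 / (snd p * (1 - snd p))"
  have "isCont ?g (x0, y0)" using assms by (intro continuous_intros) auto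
  then have "?g \<midarrow>(x0, y0)\<rightarrow> ?g (x0, y0)" by (simp add: isCont_def)
  then obtain s where s: "s > 0"
    "\<And>p. p \<noteq> (x0, y0) \<and> norm (p - (x0, y0)) < s \<Longrightarrow> norm (?g p - ?g (x0, y0)) < e"
    using assms(3) unfolding LIM_eq by metis
  show ?thesis
  proof (intro exI[of _ "s/2"] conjI allI impI)
    show "s/2 > 0" using s by simp
    fix x y assume xy: "\<bar>x - x0\<bar> < s/2 \<and> \<bar>y - y0\<bar> < s/2"
    show "x^2 / (y * (1 - y)) > x0^2 / (y0 * (1 - y0)) - e"
    proof (cases "(x, y) = (x0, y0)")
      case True then show ?thesis using assms by simp
    next
      case False
      have "norm ((x, y) - (x0, y0)) = sqrt ((x - x0)^2 + (y - y0)^2)"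
        by (simp add: norm_Pair)
      also have "\<dots> \<le> \<bar>x - x0\<bar> + \<bar>y - y0\<bar>" by (rule sqrt_sum_squares_le_sum_abs)
      also have "\<dots> < s" using xy by simp
      finally have "norm (?g (x, y) - ?g (x0, y0)) < e" using s(2)[of "(x,y)"] False by blast
      then show ?thesis by simp
    qed
  qed
qed

lemma exp_vals:
  fixes pin pout :: real
  assumes C: "C \<subseteq> {..<n}" and cC: "card C = m" and n: "n = 2 * m"
  shows "(\<Sum>i<n. \<Sum>j<n. zmat C i j * (if (i \<in> C \<longleftrightarrow> j \<in> C) then pin else pout))
           = (real n)^2 * ((pin - pout) / 2)"
    and "(\<Sum>i<n. \<Sum>j<n. (if (i \<in> C \<longleftrightarrow> j \<in> C) then pin else pout))
           = (real n)^2 * ((pin + pout) / 2)"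
proof -
  have nm: "n - card C = m" using cC n by simp
  have rn: "real n = 2 * real m" using n by simp
  have r1: "(\<Sum>j<n. zmat C i j * (if (i \<in> C \<longleftrightarrow> j \<in> C) then pin else pout)) = real m * (pin - pout)" for i
  proof (cases "i \<in> C")
    case True
    have "(\<Sum>j<n. zmat C i j * (if (i \<in> C \<longleftrightarrow> j \<in> C) then pin else pout))
        = (\<Sum>j<n. if j \<in> C then pin else - pout)"
      using True by (intro sum.cong) (auto simp: zmat_def zvec_def)
    then show ?thesis using count_sum[OF C, of pin "-pout"] nm cC rn by (simp add: algebra_simps)
  next
    case False
    have "(\<Sum>j<n. zmat C i j * (if (i \<in> C \<longleftrightarrow> j \<in> C) then pin else pout))
        = (\<Sum>j<n. if j \<in> C then - pout else pin)"
      using False by (intro sum.cong) (auto simp: zmat_def zvec_def)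
    then show ?thesis using count_sum[OF C, of "-pout" pin] nm cC rn by (simp add: algebra_simps)
  qed
  have r2: "(\<Sum>j<n. (if (i \<in> C \<longleftrightarrow> j \<in> C) then pin else pout)) = real m * (pin + pout)" for i
  proof (cases "i \<in> C")
    case True
    have "(\<Sum>j<n. (if (i \<in> C \<longleftrightarrow> j \<in> C) then pin else pout))
        = (\<Sum>j<n. if j \<in> C then pin else pout)"
      using True by (intro sum.cong) auto
    then show ?thesis using count_sum[OF C, of pin "pout"] nm cC rn by (simp add: algebra_simps)
  next
    case False
    have "(\<Sum>j<n. (if (i \<in> C \<longleftrightarrow> j \<in> C) then pin else pout))
        = (\<Sum>j<n. if j \<in> C then pout else pin)"
      using False by (intro sum.cong) auto
    then show ?thesis using count_sum[OF C, of pout pin] nm cC rn by (simp add: algebra_simps)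
  qed
  show "(\<Sum>i<n. \<Sum>j<n. zmat C i j * (if (i \<in> C \<longleftrightarrow> j \<in> C) then pin else pout))
           = (real n)^2 * ((pin - pout) / 2)"
    by (simp add: r1 power2_eq_square rn)
  show "(\<Sum>i<n. \<Sum>j<n. (if (i \<in> C \<longleftrightarrow> j \<in> C) then pin else pout))
           = (real n)^2 * ((pin + pout) / 2)"
    by (simp add: r2 power2_eq_square rn)
qed

lemma limL: fixes d :: real assumes "d > 0"
  shows "(\<lambda>m::nat. 1 - 4 * exp (-(d^2 * (real (2*m))^2) / 8)) \<longlonglongrightarrow> 1"
  using assms by real_asymp

lemma card_pairs: "card {(i,j). i \<le> j \<and> j < (n::nat)} \<le> n^2"
  and finite_pairs: "finite {(i,j). i \<le> j \<and> j < (n::nat)}"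
proof -
  have s: "{(i,j). i \<le> j \<and> j < (n::nat)} \<subseteq> {..<n} \<times> {..<n}" by auto
  show "finite {(i,j). i \<le> j \<and> j < (n::nat)}" by (rule finite_subset[OF s]) auto
  have "card {(i,j). i \<le> j \<and> j < (n::nat)} \<le> card ({..<n} \<times> {..<n})" by (rule card_mono[OF _ s]) auto
  then show "card {(i,j). i \<le> j \<and> j < (n::nat)} \<le> n^2" by (simp add: card_cartesian_product power2_eq_square)
qed

lemma bound_m:
  fixes pin pout \<epsilon> d x0 y0 :: real and Cm :: "nat set" and m :: nat
  assumes p: "0 \<le> pin" "pin \<le> 1" "0 \<le> pout" "pout \<le> 1"
    and Cm: "Cm \<subseteq> {..<2 * m}" "card Cm = m" and m: "m \<ge> 1"
    and d: "d > 0"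
    and x0: "x0 = (pin - pout) / 2" and y0: "y0 = (pin + pout) / 2"
    and dd: "\<forall>x y. \<bar>x - x0\<bar> < d \<and> \<bar>y - y0\<bar> < d \<longrightarrow> x^2 / (y * (1 - y)) > G - \<epsilon>"
  shows "1 - 4 * exp (-(d^2 * (real (2*m))^2) / 8) \<le>
     measure_pmf.prob (sbm_pmf (2 * m) Cm pin pout)
            {E. (mat_cos (2 * m) (modularity_mat (2 * m) (adj_mat E)) (zmat Cm))^2 \<ge> G - \<epsilon>}"
proof -
  define n where "n = 2 * m"
  have n0: "n > 0" using m n_def by simp
  define P where "P = {(i,j). i \<le> j \<and> j < n}"
  define q where "q = (\<lambda>p::nat\<times>nat. if (fst p \<in> Cm \<longleftrightarrow> snd p \<in> Cm) then pin else pout)"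
  define c1 where "c1 = (\<lambda>p::nat\<times>nat. if fst p = snd p then zmat Cm (fst p) (snd p) else 2 * zmat Cm (fst p) (snd p))"
  define c2 where "c2 = (\<lambda>p::nat\<times>nat. if fst p = snd p then (1::real) else 2 * 1)"
  define \<Omega> where "\<Omega> = Pi_pmf P False (\<lambda>p. bernoulli_pmf (q p))"
  have sbm: "sbm_pmf n Cm pin pout = \<Omega>"
    unfolding sbm_pmf_def \<Omega>_def P_def q_def by (rule arg_cong[where f="Pi_pmf _ False"]) (auto simp: fun_eq_iff)
  have finP: "finite P" unfolding P_def by (rule finite_pairs)
  have neP: "P \<noteq> {}" unfolding P_def using n0 by auto
  have cardP: "real (card P) \<le> (real n)^2" unfolding P_def using card_pairs[of n]
    by (metis of_nat_le_iff of_nat_power)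
  have cardP0: "real (card P) > 0" using finP neP by (simp add: card_gt_0_iff)
  have qb: "0 \<le> q p \<and> q p \<le> 1" for p using p by (simp add: q_def)
  have c1b: "\<bar>c1 p\<bar> \<le> 2" for p by (simp add: c1_def zmat_def zvec_def)
  have c2b: "\<bar>c2 p\<bar> \<le> 2" for p by (simp add: c2_def)
  have Cn: "Cm \<subseteq> {..<n}" using Cm n_def by simp
  have z0: "(\<Sum>i<n. zvec Cm i) = 0"
  proof -
    have "(\<Sum>i<n. zvec Cm i) = (\<Sum>i<n. if i \<in> Cm then 1 else - 1)" by (simp add: zvec_def)
    also have "\<dots> = 0" using count_sum[OF Cn, of 1 "-1"] Cm n_def by simp
    finally show ?thesis .
  qed
  have zsym: "zmat Cm i j = zmat Cm j i" for i j by (simp add: zmat_def)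
  have qsym: "(if (i \<in> Cm \<longleftrightarrow> j \<in> Cm) then pin else pout) = (if (j \<in> Cm \<longleftrightarrow> i \<in> Cm) then pin else pout)" for i j
    by auto
  define S1 where "S1 E = (\<Sum>i<n. \<Sum>j<n. adj_mat E i j * zmat Cm i j)" for E
  define S2 where "S2 E = (\<Sum>i<n. \<Sum>j<n. adj_mat E i j)" for E
  have S1r: "S1 E = (\<Sum>p\<in>P. c1 p * (if E p then 1 else 0))" for E
    unfolding S1_def P_def c1_def by (rule reindex_adj) (rule zsym)
  have S2r: "S2 E = (\<Sum>p\<in>P. c2 p * (if E p then 1 else 0))" for E
  proof -
    have "S2 E = (\<Sum>i<n. \<Sum>j<n. adj_mat E i j * 1)" by (simp add: S2_def)
    also have "\<dots> = (\<Sum>p\<in>P. c2 p * (if E p then 1 else 0))"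
      unfolding P_def c2_def by (rule reindex_adj) simp
    finally show ?thesis .
  qed
  have ES1: "(\<Sum>p\<in>P. c1 p * q p) = (real n)^2 * x0"
  proof -
    have "(\<Sum>p\<in>P. c1 p * q p) = (\<Sum>i<n. \<Sum>j<n. zmat Cm i j * (if (i \<in> Cm \<longleftrightarrow> j \<in> Cm) then pin else pout))"
      unfolding P_def c1_def q_def by (rule reindex_q[symmetric]) (rule zsym, rule qsym)
    also have "\<dots> = (real n)^2 * x0" unfolding x0 by (rule exp_vals(1)[OF Cn Cm(2) n_def])
    finally show ?thesis .
  qed
  have ES2: "(\<Sum>p\<in>P. c2 p * q p) = (real n)^2 * y0"
  proof -
    have "(\<Sum>p\<in>P. c2 p * q p) = (\<Sum>i<n. \<Sum>j<n. (\<lambda>_ _. 1::real) i j * (if (i \<in> Cm \<longleftrightarrow> j \<in> Cm) then pin else pout))"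
      unfolding P_def c2_def q_def by (rule reindex_q[symmetric]) (simp, rule qsym)
    also have "\<dots> = (real n)^2 * y0" unfolding y0 using exp_vals(2)[OF Cn Cm(2) n_def] by simp
    finally show ?thesis .
  qed
  define t where "t = d * (real n)^2"
  have t0: "t \<ge> 0" using d by (simp add: t_def)
  define B1 where "B1 = {E. \<bar>(\<Sum>p\<in>P. c1 p * (if E p then 1 else 0)) - (\<Sum>p\<in>P. c1 p * q p)\<bar> \<ge> t}"
  define B2 where "B2 = {E. \<bar>(\<Sum>p\<in>P. c2 p * (if E p then 1 else 0)) - (\<Sum>p\<in>P. c2 p * q p)\<bar> \<ge> t}"
  define b where "b = 2 * exp (-2 * t^2 / (16 * real (card P)))"
  have pB1: "measure_pmf.prob \<Omega> B1 \<le> b"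
    unfolding \<Omega>_def B1_def b_def by (rule conc[OF finP neP c1b qb t0])
  have pB2: "measure_pmf.prob \<Omega> B2 \<le> b"
    unfolding \<Omega>_def B2_def b_def by (rule conc[OF finP neP c2b qb t0])
  define T where "T = {E. (mat_cos n (modularity_mat n (adj_mat E)) (zmat Cm))^2 \<ge> G - \<epsilon>}"
  have sub: "UNIV - (B1 \<union> B2) \<subseteq> T"
  proof
    fix E assume E: "E \<in> UNIV - (B1 \<union> B2)"
    have N: "(real n)^2 > 0" using n0 by simp
    have h1: "\<bar>S1 E - (real n)^2 * x0\<bar> < d * (real n)^2"
      using E unfolding B1_def S1r ES1 t_def by auto
    have h2: "\<bar>S2 E - (real n)^2 * y0\<bar> < d * (real n)^2"
      using E unfolding B2_def S2r ES2 t_def by auto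
    have e1: "S1 E / (real n)^2 - x0 = (S1 E - (real n)^2 * x0) / (real n)^2" using N by (simp add: field_simps)
    have e2: "S2 E / (real n)^2 - y0 = (S2 E - (real n)^2 * y0) / (real n)^2" using N by (simp add: field_simps)
    have a1: "\<bar>S1 E / (real n)^2 - x0\<bar> < d" unfolding e1 using h1 N by (simp add: abs_divide divide_less_eq)
    have a2: "\<bar>S2 E / (real n)^2 - y0\<bar> < d" unfolding e2 using h2 N by (simp add: abs_divide divide_less_eq)
    have A01: "adj_mat E i j * adj_mat E i j = adj_mat E i j" for i j by (simp add: adj_mat_def)
    have "(mat_cos n (modularity_mat n (adj_mat E)) (zmat Cm))^2
        = (S1 E / (real n)^2)^2 / ((S2 E / (real n)^2) * (1 - S2 E / (real n)^2))"
      unfolding S1_def S2_def by (rule cos_formula[OF n0 A01 z0])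
    also have "\<dots> > G - \<epsilon>" using dd a1 a2 by blast
    finally show "E \<in> T" unfolding T_def by simp
  qed
  have "measure_pmf.prob \<Omega> T \<ge> measure_pmf.prob \<Omega> (UNIV - (B1 \<union> B2))"
    by (rule measure_pmf.finite_measure_mono[OF sub]) simp
  moreover have "measure_pmf.prob \<Omega> (UNIV - (B1 \<union> B2)) = 1 - measure_pmf.prob \<Omega> (B1 \<union> B2)"
    using measure_pmf.prob_compl[of "B1 \<union> B2" \<Omega>] by simp
  moreover have "measure_pmf.prob \<Omega> (B1 \<union> B2) \<le> measure_pmf.prob \<Omega> B1 + measure_pmf.prob \<Omega> B2"
    by (rule measure_Un_le) auto
  ultimately have pT: "measure_pmf.prob \<Omega> T \<ge> 1 - 2 * b" using pB1 pB2 by linarith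
  have "-2 * t^2 / (16 * real (card P)) \<le> -(d^2 * (real n)^2) / 8"
  proof -
    have "2 * t^2 / (16 * (real n)^2) \<le> 2 * t^2 / (16 * real (card P))"
      using cardP cardP0 n0 by (intro divide_left_mono) auto
    moreover have "2 * t^2 / (16 * (real n)^2) = d^2 * (real n)^2 / 8"
      using n0 by (simp add: t_def power2_eq_square field_simps)
    ultimately show ?thesis by simp
  qed
  then have "b \<le> 2 * exp (-(d^2 * (real n)^2) / 8)" unfolding b_def by simp
  then have "1 - 4 * exp (-(d^2 * (real n)^2) / 8) \<le> measure_pmf.prob \<Omega> T" using pT by linarith
  then show ?thesis unfolding sbm[symmetric] T_def n_def .
qed

theorem lemma9:
  fixes pin pout \<epsilon> :: real and C :: "nat \<Rightarrow> nat set"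
  assumes "0 \<le> pin" "pin \<le> 1" "0 \<le> pout" "pout \<le> 1"
    and "0 < pin + pout" "pin + pout < 2"
    and "\<epsilon> > 0"
    and "\<And>m. C m \<subseteq> {..<2 * m} \<and> card (C m) = m"
  shows "(\<lambda>m. measure_pmf.prob (sbm_pmf (2 * m) (C m) pin pout)
            {E. (mat_cos (2 * m) (modularity_mat (2 * m) (adj_mat E)) (zmat (C m)))^2
                  \<ge> (sbm_gamma pin pout)^2 - \<epsilon>}) \<longlonglongrightarrow> 1"
proof -
  define x0 where "x0 = (pin - pout) / 2"
  define y0 where "y0 = (pin + pout) / 2"
  have y0: "0 < y0" "y0 < 1" using assms(5,6) by (auto simp: y0_def)
  have gam: "(sbm_gamma pin pout)^2 = x0^2 / (y0 * (1 - y0))"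
  proof -
    have pos: "(pin + pout) * (2 - pin - pout) > 0" using assms(5,6) by simp
    have "(sbm_gamma pin pout)^2 = (pin - pout)^2 / ((pin + pout) * (2 - pin - pout))"
      unfolding sbm_gamma_def using pos by (simp add: power_divide)
    also have "\<dots> = x0^2 / (y0 * (1 - y0))"
    proof -
      have a: "x0^2 = (pin - pout)^2 / 4" unfolding x0_def by (simp add: power_divide)
      have b: "y0 * (1 - y0) = ((pin + pout) * (2 - pin - pout)) / 4"
        unfolding y0_def by (simp add: field_simps)
      show ?thesis unfolding a b by simp
    qed
    finally show ?thesis .
  qed
  obtain d where d: "d > 0" and dd: "\<forall>x y. \<bar>x - x0\<bar> < d \<and> \<bar>y - y0\<bar> < d \<longrightarrow>
            x^2 / (y * (1 - y)) > x0^2 / (y0 * (1 - y0)) - \<epsilon>"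
    using cont_delta[OF y0 assms(7)] by blast
  let ?f = "\<lambda>m. measure_pmf.prob (sbm_pmf (2 * m) (C m) pin pout)
            {E. (mat_cos (2 * m) (modularity_mat (2 * m) (adj_mat E)) (zmat (C m)))^2
                  \<ge> (sbm_gamma pin pout)^2 - \<epsilon>}"
  let ?L = "\<lambda>m::nat. 1 - 4 * exp (-(d^2 * (real (2*m))^2) / 8)"
  have lo: "eventually (\<lambda>m. ?L m \<le> ?f m) sequentially"
  proof (rule eventually_sequentiallyI[of 1])
    fix m :: nat assume m: "m \<ge> 1"
    show "?L m \<le> ?f m" unfolding gam
      by (rule bound_m[OF assms(1-4) _ _ m d x0_def y0_def dd]) (use assms(8)[of m] in auto)
  qed
  have hi: "eventually (\<lambda>m. ?f m \<le> 1) sequentially"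
    by (simp add: measure_pmf.prob_le_1)
  show ?thesis
    by (rule tendsto_sandwich[OF lo hi limL[OF d] tendsto_const])
qed

end
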